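(* Let $p$ be a minimal idempotent in $(\beta\mathbb{N}, +)$, let $\langle C_n \rangle_{n=1}^\infty$ be a sequence of members of $p$, and let $\langle a_n \rangle_{n=1}^\infty$ be a sequence in $\mathbb{N}$. Then for each $n \in \mathbb{N}$ there exists an arithmetic progression $Y_n \subseteq C_n$ of length $a_n$ such that for every nonempty finite $F \subseteq \mathbb{N}$, $\sum_{n \in F} Y_n \subseteq C_{\min F}$.
   Context: $\beta\mathbb{N}$ is the set of ultrafilters on $\mathbb{N}$ with the extension of addition $p+q = \{A \subseteq \mathbb{N} : \{x : -x+A \in q\} \in p\}$, $-x+A=\{y: x+y\in A\}$, a compact right topological semigroup. A minimal idempotent is an idempotent in the smallest two-sided ideal $K(\beta\mathbb{N})$. An arithmetic progression of length $k$ is a set $\{a, a+d, \ldots, a+(k-1)d\}$ with $a,d\in\mathbb{N}$. For finite $F \subseteq \mathbb{N}$ and nonempty sets $Y_n$, $\sum_{n \in F} Y_n = \{\sum_{n \in F} a_n : a_n \in Y_n \text{ for each } n \in F\}$. *)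

theory Defs
  imports Main
begin

text \<open>The positive integers \<open>\<nat> = {1,2,...}\<close>, represented inside type nat.\<close>
definition Npos :: "nat set" where
  "Npos = {n. 1 \<le> n}"

definition is_ultrafilter :: "nat set set \<Rightarrow> bool" where
  "is_ultrafilter p \<longleftrightarrow>
     p \<subseteq> Pow Npos \<and> Npos \<in> p \<and> {} \<notin> p \<and>
     (\<forall>A\<in>p. \<forall>B. A \<subseteq> B \<and> B \<subseteq> Npos \<longrightarrow> B \<in> p) \<and>
     (\<forall>A\<in>p. \<forall>B\<in>p. A \<inter> B \<in> p) \<and>
     (\<forall>A. A \<subseteq> Npos \<longrightarrow> A \<in> p \<or> Npos - A \<in> p)"

definition betaN :: "nat set set set" where
  "betaN = {p. is_ultrafilter p}"

definition shift_left :: "nat \<Rightarrow> nat set \<Rightarrow> nat set" where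
  "shift_left x A = {y \<in> Npos. x + y \<in> A}"

definition uplus :: "nat set set \<Rightarrow> nat set set \<Rightarrow> nat set set" (infixl "\<oplus>" 65) where
  "p \<oplus> q = {A. A \<subseteq> Npos \<and> {x \<in> Npos. shift_left x A \<in> q} \<in> p}"

definition is_ideal :: "nat set set set \<Rightarrow> bool" where
  "is_ideal I \<longleftrightarrow> I \<noteq> {} \<and> I \<subseteq> betaN \<and>
     (\<forall>p\<in>betaN. \<forall>q\<in>I. p \<oplus> q \<in> I \<and> q \<oplus> p \<in> I)"

definition K_betaN :: "nat set set set" where
  "K_betaN = \<Inter> {I. is_ideal I}"

definition minimal_idempotent :: "nat set set \<Rightarrow> bool" where
  "minimal_idempotent p \<longleftrightarrow> p \<in> betaN \<and> p \<oplus> p = p \<and> p \<in> K_betaN"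

definition is_AP :: "nat set \<Rightarrow> nat \<Rightarrow> bool" where
  "is_AP Y k \<longleftrightarrow> (\<exists>a d. 1 \<le> a \<and> 1 \<le> d \<and> Y = {a + i * d | i. i < k})"

definition setsum_sets :: "nat set \<Rightarrow> (nat \<Rightarrow> nat set) \<Rightarrow> nat set" where
  "setsum_sets F Y = {(\<Sum>n\<in>F. f n) | f. \<forall>n\<in>F. f n \<in> Y n}"

end

theory Submission
  imports Defs "HOL-Library.FuncSet"
begin


definition vdw_prop :: "nat \<Rightarrow> bool" where
 "vdw_prop k \<longleftrightarrow> (\<forall>r. \<exists>N. \<forall>c::nat\<Rightarrow>nat. (\<forall>x<N. c x < r) \<longrightarrow>
     (\<exists>a d. 0<d \<and> a + k*d < N \<and> (\<forall>i<k. c(a+i*d) = c a)))"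

definition mono_ap :: "nat \<Rightarrow> nat \<Rightarrow> (nat\<Rightarrow>nat) \<Rightarrow> bool" where
 "mono_ap k M c \<longleftrightarrow> (\<exists>a d. 0<d \<and> a + k*d < M \<and> (\<forall>i\<le>k. c(a+i*d) = c a))"

definition fan :: "nat \<Rightarrow> nat \<Rightarrow> nat \<Rightarrow> (nat\<Rightarrow>nat) \<Rightarrow> bool" where
 "fan k s M c \<longleftrightarrow> (\<exists>f A D col. f < M \<and> inj_on col {..<s} \<and>
    (\<forall>j<s. 0 < D j \<and> A j + k*D j = f \<and> (\<forall>i<k. c(A j + i*D j) = col j)))"

lemma claim_step:
  assumes vk: "vdw_prop k" and k: "0<k"
  and IH: "\<forall>c. (\<forall>x<m. c x < r) \<longrightarrow> mono_ap k m c \<or> fan k s m c"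
  shows "\<exists>M. \<forall>c. (\<forall>x<M. c x < r) \<longrightarrow> mono_ap k M c \<or> fan k (Suc s) M c"
proof -
  define X where "X = PiE {..<m} (\<lambda>_. {..<r})"
  have finX: "finite X" unfolding X_def by (simp add: finite_PiE)
  obtain h where h: "bij_betw h X {0..<card X}" using ex_bij_betw_finite_nat[OF finX] by blast
  obtain N where N: "\<forall>c::nat\<Rightarrow>nat. (\<forall>x<N. c x < card X) \<longrightarrow> (\<exists>a d. 0<d \<and> a + k*d < N \<and> (\<forall>i<k. c(a+i*d) = c a))"
    using vk unfolding vdw_prop_def by blast
  have blk: "t*m + x < N*m" if "t < N" "x < m" for t x
  proof -
    have "t*m + x < t*m + m" using that by simp
    also have "... = (Suc t)*m" by simp
    also have "... \<le> N*m" using \<open>t<N\<close> by (intro mult_right_mono) auto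
    finally show ?thesis .
  qed
  show ?thesis
  proof (rule exI[of _ "N*m"], intro allI impI)
    fix c :: "nat \<Rightarrow> nat" assume c: "\<forall>x<N*m. c x < r"
    define cb where "cb t = h (restrict (\<lambda>x. c (t*m+x)) {..<m})" for t
    have inX: "restrict (\<lambda>x. c (t*m+x)) {..<m} \<in> X" if "t < N" for t
      unfolding X_def using c blk[OF that] by auto
    have "\<forall>x<N. cb x < card X" using inX h by (auto simp: cb_def bij_betw_def)
    then obtain b e where be: "0<e" "b + k*e < N" "\<forall>i<k. cb(b+i*e) = cb b" using N by blast
    have bN: "b < N" using be(2) k be(1) by (metis add_lessD1)
    have blocks: "c((b+i*e)*m + x) = c(b*m+x)" if "i<k" "x<m" for i x
    proof -
      have "i*e \<le> k*e" using that(1) by simp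
      then have "b + i*e < N" using be(2) by linarith
      then have "restrict (\<lambda>x. c ((b+i*e)*m+x)) {..<m} = restrict (\<lambda>x. c (b*m+x)) {..<m}"
        using be(3) that(1) inX[of "b+i*e"] inX[OF bN] h unfolding bij_betw_def inj_on_def cb_def
        by blast
      then show ?thesis using that(2) by (metis lessThan_iff restrict_apply')
    qed
    define c0 where "c0 x = c(b*m+x)" for x
    have "\<forall>x<m. c0 x < r" using c blk[OF bN] by (simp add: c0_def)
    then have "mono_ap k m c0 \<or> fan k s m c0" using IH by blast
    then show "mono_ap k (N*m) c \<or> fan k (Suc s) (N*m) c"
    proof
      assume "mono_ap k m c0"
      then obtain a d where ad: "0<d" "a + k*d < m" "\<forall>i\<le>k. c0(a+i*d) = c0 a"
        unfolding mono_ap_def by blast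
      have "b*m + a + k*d < N*m" using blk[OF bN ad(2)] by simp
      moreover have "\<forall>i\<le>k. c(b*m+a+i*d) = c (b*m+a)" using ad(3) by (simp add: c0_def add.assoc)
      ultimately show ?thesis unfolding mono_ap_def using ad(1) by blast
    next
      assume "fan k s m c0"
      then obtain f A D col where F: "f < m" "inj_on col {..<s}"
        "\<forall>j<s. 0 < D j \<and> A j + k*D j = f \<and> (\<forall>i<k. c0(A j + i*D j) = col j)"
        unfolding fan_def by blast
      have m0: "0 < m" using F(1) by simp
      show ?thesis
      proof (cases "\<exists>j<s. col j = c0 f")
        case True
        then obtain j where j: "j<s" "col j = c0 f" by blast
        have "b*m + A j + k*D j < N*m" using blk[OF bN F(1)] F(3) j(1) by (simp add: add.assoc)
        moreover have "\<forall>i\<le>k. c(b*m + A j+i*D j) = c (b*m + A j)"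
        proof (intro allI impI)
          fix i assume "i \<le> k"
          have "c0 (A j + i*D j) = col j"
          proof (cases "i<k")
            case True then show ?thesis using F(3) j(1) by blast
          next
            case False then have "i = k" using \<open>i\<le>k\<close> by simp
            then show ?thesis using F(3) j by auto
          qed
          moreover have "c0 (A j) = col j" using F(3) j(1) k by (metis add_0_right mult_zero_left)
          ultimately show "c(b*m + A j+i*D j) = c (b*m + A j)" by (simp add: c0_def add.assoc)
        qed
        ultimately show ?thesis unfolding mono_ap_def using F(3) j(1) by blast
      next
        case False
        define f' where "f' = (b + k*e)*m + f"
        define A' where "A' j = (if j < s then b*m + A j else b*m + f)" for j
        define D' where "D' j = (if j < s then D j + e*m else e*m)" for j
        define col' where "col' j = (if j < s then col j else c0 f)" for j
        have "f' < N*m" unfolding f'_def using blk[OF be(2) F(1)] .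
        moreover have "inj_on col' {..<Suc s}"
          using F(2) False unfolding inj_on_def col'_def
          by (auto simp: less_Suc_eq)
        moreover have "\<forall>j<Suc s. 0 < D' j \<and> A' j + k*D' j = f' \<and> (\<forall>i<k. c(A' j + i*D' j) = col' j)"
        proof (intro allI impI)
          fix j assume "j < Suc s"
          show "0 < D' j \<and> A' j + k*D' j = f' \<and> (\<forall>i<k. c(A' j + i*D' j) = col' j)"
          proof (cases "j<s")
            case True
            have Fj: "0 < D j" "A j + k*D j = f" "\<forall>i<k. c0(A j + i*D j) = col j" using F(3) True by auto
            have "\<forall>i<k. c(A' j + i*D' j) = col' j"
            proof (intro allI impI)
              fix i assume i: "i<k"
              have "i*D j \<le> k * D j" using i by simp
              then have lt: "A j + i*D j < m" using Fj(2) F(1) by linarith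
              have "A' j + i*D' j = (b+i*e)*m + (A j + i*D j)"
                using True by (simp add: A'_def D'_def algebra_simps)
              then have "c(A' j + i*D' j) = c(b*m + (A j + i*D j))" using blocks[OF i lt] by simp
              then show "c(A' j + i*D' j) = col' j" using Fj(3) i True by (simp add: c0_def col'_def)
            qed
            moreover have "A' j + k*D' j = f'" using True Fj(2)
              by (simp add: A'_def D'_def f'_def algebra_simps)
            ultimately show ?thesis using Fj(1) True by (simp add: D'_def)
          next
            case False
            have "\<forall>i<k. c(A' j + i*D' j) = col' j"
            proof (intro allI impI)
              fix i assume i: "i<k"
              have "A' j + i*D' j = (b+i*e)*m + f"
                using False by (simp add: A'_def D'_def algebra_simps)
              then show "c(A' j + i*D' j) = col' j" using blocks[OF i F(1)] False
                by (simp add: c0_def col'_def)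
            qed
            moreover have "A' j + k*D' j = f'" using False
              by (simp add: A'_def D'_def f'_def algebra_simps)
            ultimately show ?thesis using False be(1) m0 by (simp add: D'_def)
          qed
        qed
        ultimately show ?thesis unfolding fan_def by blast
      qed
    qed
  qed
qed

lemma claim:
  assumes vk: "vdw_prop k" and k: "0<k"
  shows "\<exists>M. \<forall>c. (\<forall>x<M. c x < r) \<longrightarrow> mono_ap k M c \<or> fan k s M c"
proof (induction s)
  case 0
  show ?case by (rule exI[of _ 1]) (auto simp: fan_def)
next
  case (Suc s)
  then obtain m where "\<forall>c. (\<forall>x<m. c x < r) \<longrightarrow> mono_ap k m c \<or> fan k s m c" by blast
  then show ?case using claim_step[OF vk k] by blast
qed

lemma vdw_Suc:
  assumes vk: "vdw_prop k" and k: "0<k"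
  shows "vdw_prop (Suc k)"
  unfolding vdw_prop_def
proof
  fix r
  obtain M where M: "\<forall>c. (\<forall>x<M. c x < r) \<longrightarrow> mono_ap k M c \<or> fan k r M c"
    using claim[OF vk k] by blast
  show "\<exists>N. \<forall>c::nat\<Rightarrow>nat. (\<forall>x<N. c x < r) \<longrightarrow>
     (\<exists>a d. 0<d \<and> a + Suc k*d < N \<and> (\<forall>i<Suc k. c(a+i*d) = c a))"
  proof (rule exI[of _ "2*M"], intro allI impI)
    fix c :: "nat \<Rightarrow> nat" assume c: "\<forall>x<2*M. c x < r"
    then have "\<forall>x<M. c x < r" by simp
    then have "mono_ap k M c" 
    proof -
      assume cM: "\<forall>x<M. c x < r"
      have "mono_ap k M c \<or> fan k r M c" using M cM by blast
      then show ?thesis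
      proof
        assume "fan k r M c"
        then obtain f A D col where F: "f < M" "inj_on col {..<r}"
          "\<forall>j<r. 0 < D j \<and> A j + k*D j = f \<and> (\<forall>i<k. c(A j + i*D j) = col j)"
          unfolding fan_def by blast
        have colA: "col j = c (A j)" if "j<r" for j
          using F(3) that k by (metis add_0_right mult_zero_left)
        have "col ` {..<r} \<subseteq> {..<r}"
        proof
          fix y assume "y \<in> col ` {..<r}"
          then obtain j where j: "j<r" "y = col j" by blast
          have "A j \<le> f" using F(3) j(1) by (metis le_add1)
          then show "y \<in> {..<r}" using cM F(1) colA[OF j(1)] j(2) by auto
        qed
        then have "col ` {..<r} = {..<r}" using endo_inj_surj[OF _ _ F(2)] by blast
        moreover have "c f \<in> {..<r}" using cM F(1) by auto
        ultimately have "c f \<in> col ` {..<r}" by simp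
        then obtain j where j: "j<r" "col j = c f" by force
        have "\<forall>i\<le>k. c(A j+i*D j) = c (A j)"
        proof (intro allI impI)
          fix i assume "i \<le> k"
          then show "c(A j+i*D j) = c (A j)"
            using F(3) j colA[OF j(1)] by (cases "i<k") auto
        qed
        then show ?thesis unfolding mono_ap_def using F(1,3) j(1) by blast
      qed
    qed
    then obtain a d where ad: "0<d" "a + k*d < M" "\<forall>i\<le>k. c(a+i*d) = c a"
      unfolding mono_ap_def by blast
    have dk: "d \<le> k*d" using k by simp
    have "a + Suc k * d = a + k*d + d" by simp
    then have "a + Suc k * d < 2*M" using ad(2) dk by linarith
    then show "\<exists>a d. 0<d \<and> a + Suc k*d < 2*M \<and> (\<forall>i<Suc k. c(a+i*d) = c a)"
      using ad by (auto simp: less_Suc_eq_le)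
  qed
qed

lemma vdw_1: "vdw_prop (Suc 0)"
  unfolding vdw_prop_def
proof (intro allI)
  fix r show "\<exists>N. \<forall>c::nat\<Rightarrow>nat. (\<forall>x<N. c x < r) \<longrightarrow>
     (\<exists>a d. 0<d \<and> a + Suc 0*d < N \<and> (\<forall>i<Suc 0. c(a+i*d) = c a))"
    by (rule exI[of _ 2], intro allI impI exI[of _ 0] exI[of _ 1]) auto
qed

lemma vdw: "vdw_prop k"
proof (cases k)
  case 0 then show ?thesis unfolding vdw_prop_def
    by (intro allI exI[of _ 1] impI exI[of _ 0] exI[of _ 1]) auto
next
  case (Suc n)
  have "vdw_prop (Suc n)"
  proof (induction n)
    case 0 show ?case by (rule vdw_1)
  next
    case (Suc n) then show ?case using vdw_Suc by blast
  qed
  then show ?thesis using Suc by simp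
qed



definition APrich :: "nat set \<Rightarrow> bool" where
 "APrich A \<longleftrightarrow> (\<forall>k. \<exists>a d. 1 \<le> a \<and> 1 \<le> d \<and> (\<forall>i<k. a + i*d \<in> A))"

lemma APrich_mono:
  assumes "APrich A" "A \<subseteq> B" shows "APrich B"
  unfolding APrich_def
proof
  fix k
  obtain a d where "1 \<le> a" "1 \<le> d" "\<forall>i<k. a + i*d \<in> A" using assms(1) unfolding APrich_def by blast
  then show "\<exists>a d. 1 \<le> a \<and> 1 \<le> d \<and> (\<forall>i<k. a + i*d \<in> B)" using assms(2) by blast
qed

lemma not_APrich_le:
  fixes A :: "nat set"
  assumes "\<forall>a d. 1 \<le> a \<longrightarrow> 1 \<le> d \<longrightarrow> (\<exists>i<k0. a + i*d \<notin> A)" "k0 \<le> k"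
  shows "\<forall>a d. 1 \<le> a \<longrightarrow> 1 \<le> d \<longrightarrow> (\<exists>i<k. a + i*d \<notin> A)"
proof (intro allI impI)
  fix a d :: nat assume "1 \<le> a" "1 \<le> d"
  then obtain i where "i<k0" "a + i*d \<notin> A" using assms(1) by blast
  then show "\<exists>i<k. a + i*d \<notin> A" using assms(2) by (intro exI[of _ i]) auto
qed

lemma notAP: "\<not> APrich A \<Longrightarrow> \<exists>k. \<forall>a d. 1 \<le> a \<longrightarrow> 1 \<le> d \<longrightarrow> (\<exists>i<k. a + i*d \<notin> A)"
  unfolding APrich_def by simp

lemma APrichD: "APrich A \<Longrightarrow> \<exists>a d. 1 \<le> a \<and> 1 \<le> d \<and> (\<forall>i<N. a + i*d \<in> A)"
  unfolding APrich_def by (erule allE[of _ N])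

lemma APrich_Un:
  assumes "APrich (A \<union> B)" shows "APrich A \<or> APrich B"
proof (rule ccontr)
  assume "\<not> (APrich A \<or> APrich B)"
  then have "\<not> APrich A" "\<not> APrich B" by auto
  then obtain kA kB where kA: "\<forall>a d. 1 \<le> a \<longrightarrow> 1 \<le> d \<longrightarrow> (\<exists>i<kA. a + i*d \<notin> A)"
    and kB: "\<forall>a d. 1 \<le> a \<longrightarrow> 1 \<le> d \<longrightarrow> (\<exists>i<kB. a + i*d \<notin> B)"
    using notAP by metis
  define k where "k = max kA kB"
  have kA': "\<forall>a d. 1 \<le> a \<longrightarrow> 1 \<le> d \<longrightarrow> (\<exists>i<k. a + i*d \<notin> A)"
    by (rule not_APrich_le[OF kA]) (simp add: k_def)
  have kB': "\<forall>a d. 1 \<le> a \<longrightarrow> 1 \<le> d \<longrightarrow> (\<exists>i<k. a + i*d \<notin> B)"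
    by (rule not_APrich_le[OF kB]) (simp add: k_def)
  obtain N where N: "\<forall>c::nat\<Rightarrow>nat. (\<forall>x<N. c x < 2) \<longrightarrow>
     (\<exists>a d. 0<d \<and> a + k*d < N \<and> (\<forall>i<k. c(a+i*d) = c a))"
    using vdw[of k] unfolding vdw_prop_def by blast
  obtain a d where ad: "1 \<le> a" "1 \<le> d" "\<forall>i<N. a + i*d \<in> A \<union> B"
    using APrichD[OF assms] by blast
  define c where "c i = (if a + i*d \<in> A then 0 else 1::nat)" for i
  have "\<forall>x<N. c x < 2" by (simp add: c_def)
  then obtain a' e where ae: "0<e" "a' + k*e < N" "\<forall>i<k. c(a'+i*e) = c a'"
    using N by blast
  have eq: "a + (a'+i*e)*d = (a + a'*d) + i*(e*d)" for i by (simp add: algebra_simps)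
  have st: "1 \<le> a + a'*d" "1 \<le> e*d" using ad ae(1) by auto
  have idx: "a' + i*e < N" if "i<k" for i
  proof -
    have "i*e \<le> k*e" using that by simp
    then show ?thesis using ae(2) by linarith
  qed
  show False
  proof (cases "c a' = 0")
    case True
    have "\<forall>i<k. (a + a'*d) + i*(e*d) \<in> A"
    proof (intro allI impI)
      fix i assume "i<k"
      then have "c (a'+i*e) = 0" using ae(3) True by simp
      then have "a + (a'+i*e)*d \<in> A" unfolding c_def by (simp split: if_splits)
      then show "(a + a'*d) + i*(e*d) \<in> A" by (simp only: eq)
    qed
    moreover obtain i where "i<k" "(a + a'*d) + i*(e*d) \<notin> A" using kA' st by blast
    ultimately show False by blast
  next
    case False
    have "\<forall>i<k. (a + a'*d) + i*(e*d) \<in> B"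
    proof (intro allI impI)
      fix i assume i: "i<k"
      then have "c (a'+i*e) \<noteq> 0" using ae(3) False by simp
      then have "a + (a'+i*e)*d \<notin> A" unfolding c_def by (simp split: if_splits)
      moreover have "a + (a'+i*e)*d \<in> A \<union> B" using ad(3) idx[OF i] by blast
      ultimately show "(a + a'*d) + i*(e*d) \<in> B" by (simp only: eq) blast
    qed
    moreover obtain i where "i<k" "(a + a'*d) + i*(e*d) \<notin> B" using kB' st by blast
    ultimately show False by blast
  qed
qed


lemma uf_sub: "is_ultrafilter q \<Longrightarrow> A \<in> q \<Longrightarrow> A \<subseteq> Npos"
  unfolding is_ultrafilter_def by blast
lemma uf_ne: "is_ultrafilter q \<Longrightarrow> A \<in> q \<Longrightarrow> A \<noteq> {}"
  unfolding is_ultrafilter_def by blast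
lemma uf_int: "is_ultrafilter q \<Longrightarrow> A \<in> q \<Longrightarrow> B \<in> q \<Longrightarrow> A \<inter> B \<in> q"
  unfolding is_ultrafilter_def by blast
lemma uf_up: "is_ultrafilter q \<Longrightarrow> A \<in> q \<Longrightarrow> A \<subseteq> B \<Longrightarrow> B \<subseteq> Npos \<Longrightarrow> B \<in> q"
  unfolding is_ultrafilter_def by blast
lemma uf_Npos: "is_ultrafilter q \<Longrightarrow> Npos \<in> q"
  unfolding is_ultrafilter_def by blast

lemma uf_Inter:
  assumes q: "is_ultrafilter q" and "finite S"
  shows "S \<subseteq> q \<Longrightarrow> B \<in> q \<Longrightarrow> B \<inter> \<Inter>S \<in> q"
  using assms(2)
proof (induction S)
  case empty then show ?case by simp
next
  case (insert x F)
  then have "B \<inter> \<Inter>F \<in> q" by simp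
  then have "x \<inter> (B \<inter> \<Inter>F) \<in> q" using uf_int[OF q] insert.prems by blast
  then show ?case by (simp add: Int_ac)
qed

lemma APrich_Npos: "APrich Npos"
  unfolding APrich_def Npos_def by (intro allI exI[of _ 1]) auto

lemma not_APrich_empty: "\<not> APrich {}"
  using APrichD[of "{}" 1] by auto

definition goodF :: "nat set set set" where
  "goodF = {F. F \<subseteq> Pow Npos \<and> Npos \<in> F \<and> (\<forall>A\<in>F. \<forall>B. A\<subseteq>B \<and> B\<subseteq>Npos \<longrightarrow> B\<in>F)
      \<and> (\<forall>A\<in>F. \<forall>B\<in>F. A\<inter>B\<in>F) \<and> (\<forall>A\<in>F. APrich A)}"

lemma max_step:
  assumes M: "M \<in> goodF" and mx: "\<forall>X\<in>goodF. M \<subseteq> X \<longrightarrow> X = M"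
    and A: "A \<subseteq> Npos" "A \<notin> M"
  shows "\<exists>C\<in>M. \<not> APrich (C \<inter> A)"
proof (rule ccontr)
  assume H: "\<not> (\<exists>C\<in>M. \<not> APrich (C \<inter> A))"
  define MA where "MA = {B. B \<subseteq> Npos \<and> (\<exists>C\<in>M. C \<inter> A \<subseteq> B)}"
  have Msub: "M \<subseteq> Pow Npos" "Npos \<in> M" "\<forall>A\<in>M. \<forall>B\<in>M. A\<inter>B\<in>M"
    using M unfolding goodF_def by auto
  have "MA \<in> goodF"
    unfolding goodF_def
  proof (intro CollectI conjI ballI allI impI)
    show "MA \<subseteq> Pow Npos" unfolding MA_def by auto
    show "Npos \<in> MA" unfolding MA_def using Msub(2) by blast
    show "B \<in> MA" if "X \<in> MA" "X \<subseteq> B \<and> B \<subseteq> Npos" for X B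
      using that unfolding MA_def by blast
    show "X \<inter> Y \<in> MA" if XY: "X \<in> MA" "Y \<in> MA" for X Y
    proof -
      obtain C1 C2 where "C1\<in>M" "C1 \<inter> A \<subseteq> X" "C2\<in>M" "C2 \<inter> A \<subseteq> Y" "X \<subseteq> Npos"
        using XY unfolding MA_def by blast
      then show ?thesis unfolding MA_def using Msub(3) by (intro CollectI conjI bexI[of _ "C1\<inter>C2"]) auto
    qed
    show "APrich X" if "X \<in> MA" for X
      using that H APrich_mono unfolding MA_def by blast
  qed
  moreover have "M \<subseteq> MA" unfolding MA_def using Msub(1) by blast
  ultimately have "MA = M" using mx by blast
  moreover have "A \<in> MA" unfolding MA_def using A(1) Msub(2) by blast
  ultimately show False using A(2) by simp
qed

lemma goodF_D:
  assumes "F \<in> goodF"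
  shows "F \<subseteq> Pow Npos" "Npos \<in> F" "\<And>A B. A \<in> F \<Longrightarrow> A\<subseteq>B \<Longrightarrow> B\<subseteq>Npos \<Longrightarrow> B\<in>F"
      "\<And>A B. A \<in> F \<Longrightarrow> B \<in> F \<Longrightarrow> A\<inter>B\<in>F" "\<And>A. A \<in> F \<Longrightarrow> APrich A"
  using assms unfolding goodF_def by auto

lemma exists_APrich_uf: "\<exists>q. is_ultrafilter q \<and> (\<forall>A\<in>q. APrich A)"
proof -
  have "\<exists>M\<in>goodF. \<forall>X\<in>goodF. M \<subseteq> X \<longrightarrow> X = M"
  proof (rule subset_Zorn_nonempty)
    have "{Npos} \<in> goodF" unfolding goodF_def using APrich_Npos by auto
    then show "goodF \<noteq> {}" by blast
  next
    fix C assume C: "C \<noteq> {}" "subset.chain goodF C"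
    then have CG: "C \<subseteq> goodF" and ch: "\<forall>X\<in>C. \<forall>Y\<in>C. X \<subseteq> Y \<or> Y \<subseteq> X"
      unfolding subset.chain_def by auto
    have P: "\<Union>C \<subseteq> Pow Npos"
    proof
      fix X assume "X \<in> \<Union>C"
      then obtain F where "F \<in> C" "X \<in> F" by blast
      then show "X \<in> Pow Npos" using goodF_D(1) CG by blast
    qed
    obtain F0 where "F0 \<in> C" using C(1) by blast
    then have N: "Npos \<in> \<Union>C" using goodF_D(2) CG by blast
    have U: "B \<in> \<Union>C" if XB: "X \<in> \<Union>C" "X \<subseteq> B" "B \<subseteq> Npos" for X B
    proof -
      obtain F where F: "F \<in> C" "X \<in> F" using XB(1) by blast
      then have "B \<in> F" using goodF_D(3)[of F X B] CG XB by blast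
      then show ?thesis using F by blast
    qed
    have I: "X \<inter> Y \<in> \<Union>C" if XY: "X \<in> \<Union>C" "Y \<in> \<Union>C" for X Y
    proof -
      obtain F1 F2 where F: "F1 \<in> C" "X \<in> F1" "F2 \<in> C" "Y \<in> F2" using XY by blast
      then have "X \<in> F1 \<and> Y \<in> F1 \<or> X \<in> F2 \<and> Y \<in> F2" using ch by blast
      then show ?thesis
      proof
        assume "X \<in> F1 \<and> Y \<in> F1" then show ?thesis using goodF_D(4)[of F1 X Y] F(1) CG by blast
      next
        assume "X \<in> F2 \<and> Y \<in> F2" then show ?thesis using goodF_D(4)[of F2 X Y] F(3) CG by blast
      qed
    qed
    have R: "APrich X" if X: "X \<in> \<Union>C" for X
    proof -
      obtain F where F: "F \<in> C" "X \<in> F" using X by blast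
      then show ?thesis using goodF_D(5)[of F X] CG by blast
    qed
    show "\<Union>C \<in> goodF" unfolding goodF_def using P N U I R by blast
  qed
  then obtain M where M: "M \<in> goodF" and mx: "\<forall>X\<in>goodF. M \<subseteq> X \<longrightarrow> X = M" by blast
  have props: "M \<subseteq> Pow Npos" "Npos \<in> M" "\<forall>A\<in>M. \<forall>B. A\<subseteq>B \<and> B\<subseteq>Npos \<longrightarrow> B\<in>M"
     "\<forall>A\<in>M. \<forall>B\<in>M. A\<inter>B\<in>M" "\<forall>A\<in>M. APrich A"
    using goodF_D[OF M] by blast+
  have compl: "A \<in> M \<or> Npos - A \<in> M" if A: "A \<subseteq> Npos" for A
  proof (rule ccontr)
    assume "\<not> (A \<in> M \<or> Npos - A \<in> M)"
    then obtain C1 C2 where C: "C1 \<in> M" "\<not> APrich (C1 \<inter> A)" "C2 \<in> M" "\<not> APrich (C2 \<inter> (Npos - A))"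
      using max_step[OF M mx A] max_step[OF M mx, of "Npos - A"] by blast
    have "C1 \<inter> C2 \<in> M" using props(4) C by blast
    then have "APrich (C1 \<inter> C2)" using props(5) by blast
    moreover have "C1 \<inter> C2 \<subseteq> (C1 \<inter> A) \<union> (C2 \<inter> (Npos - A))" using props(1) C(1) by blast
    ultimately have "APrich ((C1 \<inter> A) \<union> (C2 \<inter> (Npos - A)))" using APrich_mono by blast
    then show False using APrich_Un C by blast
  qed
  have "{} \<notin> M" using props(5) not_APrich_empty by blast
  then have "is_ultrafilter M"
    unfolding is_ultrafilter_def using props(1-4) compl by blast
  then show ?thesis using props(5) by blast
qed



lemma sl_Npos: "shift_left x Npos = Npos" unfolding shift_left_def Npos_def by auto
lemma sl_empty: "shift_left x {} = {}" unfolding shift_left_def by auto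
lemma sl_mono: "A \<subseteq> B \<Longrightarrow> shift_left x A \<subseteq> shift_left x B" unfolding shift_left_def by auto
lemma sl_Int: "shift_left x (A \<inter> B) = shift_left x A \<inter> shift_left x B" unfolding shift_left_def by auto
lemma sl_diff: "shift_left x (Npos - A) = Npos - shift_left x A" unfolding shift_left_def Npos_def by auto
lemma sl_sub: "shift_left x A \<subseteq> Npos" unfolding shift_left_def by auto

lemma uf_compl_iff:
  assumes q: "is_ultrafilter q" and X: "X \<subseteq> Npos"
  shows "Npos - X \<in> q \<longleftrightarrow> X \<notin> q"
proof
  assume "Npos - X \<in> q"
  then show "X \<notin> q" using uf_int[OF q, of X "Npos - X"] uf_ne[OF q] by auto
next
  assume "X \<notin> q" then show "Npos - X \<in> q" using q X unfolding is_ultrafilter_def by blast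
qed

lemma uf_int_iff: "is_ultrafilter q \<Longrightarrow> X \<subseteq> Npos \<Longrightarrow> Y \<subseteq> Npos \<Longrightarrow> X \<inter> Y \<in> q \<longleftrightarrow> X \<in> q \<and> Y \<in> q"
  using uf_int uf_up by (metis inf_le1 inf_le2)

lemma uplus_uf:
  assumes p: "is_ultrafilter p" and q: "is_ultrafilter q"
  shows "is_ultrafilter (p \<oplus> q)"
proof -
  define S where "S A = {x\<in>Npos. shift_left x A \<in> q}" for A
  have mem: "A \<in> p \<oplus> q \<longleftrightarrow> A \<subseteq> Npos \<and> S A \<in> p" for A unfolding uplus_def S_def by simp
  have SN: "S Npos = Npos" unfolding S_def using sl_Npos uf_Npos[OF q] by auto
  have Se: "S {} = {}" unfolding S_def using sl_empty uf_ne[OF q] by auto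
  have Ssub: "S A \<subseteq> Npos" for A unfolding S_def by auto
  have Smono: "S A \<subseteq> S B" if AB: "A \<subseteq> B" for A B
  proof
    fix x assume "x \<in> S A"
    then have "x \<in> Npos" "shift_left x A \<in> q" unfolding S_def by auto
    moreover have "shift_left x B \<in> q" using uf_up[OF q \<open>shift_left x A \<in> q\<close> sl_mono[OF AB] sl_sub] .
    ultimately show "x \<in> S B" unfolding S_def by simp
  qed
  have SI: "S (A \<inter> B) = S A \<inter> S B" for A B
    unfolding S_def sl_Int using uf_int_iff[OF q sl_sub sl_sub] by auto
  have SD: "S (Npos - A) = Npos - S A" for A
    unfolding S_def sl_diff using uf_compl_iff[OF q sl_sub] by auto
  show ?thesis unfolding is_ultrafilter_def
  proof (intro conjI ballI allI impI)
    show "p \<oplus> q \<subseteq> Pow Npos" using mem by auto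
    show "Npos \<in> p \<oplus> q" using mem SN uf_Npos[OF p] by auto
    show "{} \<notin> p \<oplus> q" using mem Se uf_ne[OF p] by auto
    show "B \<in> p \<oplus> q" if "A \<in> p \<oplus> q" "A \<subseteq> B \<and> B \<subseteq> Npos" for A B
    proof -
      have "S A \<in> p" "A \<subseteq> B" "B \<subseteq> Npos" using that mem by auto
      then have "S B \<in> p" using uf_up[OF p _ Smono Ssub] by blast
      then show ?thesis using mem \<open>B \<subseteq> Npos\<close> by blast
    qed
    show "A \<inter> B \<in> p \<oplus> q" if "A \<in> p \<oplus> q" "B \<in> p \<oplus> q" for A B
    proof -
      have "S A \<in> p" "S B \<in> p" "A \<subseteq> Npos" using that mem by auto
      then show ?thesis using mem SI uf_int[OF p] by auto
    qed
    show "A \<in> p \<oplus> q \<or> Npos - A \<in> p \<oplus> q" if "A \<subseteq> Npos" for A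
    proof (cases "S A \<in> p")
      case True then show ?thesis using mem that by blast
    next
      case False
      then have "S (Npos - A) \<in> p" using SD uf_compl_iff[OF p Ssub] by simp
      then show ?thesis using mem by blast
    qed
  qed
qed

definition Iap :: "nat set set set" where "Iap = {q \<in> betaN. \<forall>A\<in>q. APrich A}"

lemma Iap_ideal: "is_ideal Iap"
  unfolding is_ideal_def
proof (intro conjI ballI)
  show "Iap \<noteq> {}" using exists_APrich_uf unfolding Iap_def betaN_def by blast
  show "Iap \<subseteq> betaN" unfolding Iap_def by blast
  fix r q assume r: "r \<in> betaN" and qI: "q \<in> Iap"
  have ru: "is_ultrafilter r" using r unfolding betaN_def by simp
  have qu: "is_ultrafilter q" and qA: "\<forall>A\<in>q. APrich A" using qI unfolding Iap_def betaN_def by auto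
  show "r \<oplus> q \<in> Iap" unfolding Iap_def
  proof (intro CollectI conjI ballI)
    show "r \<oplus> q \<in> betaN" using uplus_uf[OF ru qu] unfolding betaN_def by simp
    fix A assume A: "A \<in> r \<oplus> q"
    then have "{x\<in>Npos. shift_left x A \<in> q} \<in> r" unfolding uplus_def by simp
    then obtain x where x: "x \<in> Npos" "shift_left x A \<in> q" using uf_ne[OF ru] by blast
    then have ap: "APrich (shift_left x A)" using qA by blast
    show "APrich A" unfolding APrich_def
    proof
      fix k
      obtain a d where "1 \<le> a" "1 \<le> d" "\<forall>i<k. a + i*d \<in> shift_left x A" using APrichD[OF ap] by blast
      then have "1 \<le> x+a \<and> 1 \<le> d \<and> (\<forall>i<k. (x+a) + i*d \<in> A)"
        by (auto simp: shift_left_def add.assoc)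
      then show "\<exists>a d. 1 \<le> a \<and> 1 \<le> d \<and> (\<forall>i<k. a + i*d \<in> A)" by blast
    qed
  qed
  show "q \<oplus> r \<in> Iap" unfolding Iap_def
  proof (intro CollectI conjI ballI)
    show "q \<oplus> r \<in> betaN" using uplus_uf[OF qu ru] unfolding betaN_def by simp
    fix A assume A: "A \<in> q \<oplus> r"
    then have "{x\<in>Npos. shift_left x A \<in> r} \<in> q" unfolding uplus_def by simp
    then have ap: "APrich {x\<in>Npos. shift_left x A \<in> r}" using qA by blast
    show "APrich A" unfolding APrich_def
    proof
      fix k
      obtain a d where ad: "1 \<le> a" "1 \<le> d" "\<forall>i<k. a + i*d \<in> {x\<in>Npos. shift_left x A \<in> r}"
        using APrichD[OF ap] by blast
      have "(\<lambda>i. shift_left (a+i*d) A) ` {..<k} \<subseteq> r" using ad(3) by auto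
      then have "Npos \<inter> \<Inter>((\<lambda>i. shift_left (a+i*d) A) ` {..<k}) \<in> r"
        using uf_Inter[OF ru] uf_Npos[OF ru] by blast
      then obtain y where y: "y \<in> Npos" "\<forall>i<k. y \<in> shift_left (a+i*d) A" using uf_ne[OF ru] by blast
      have "1 \<le> a+y \<and> 1 \<le> d \<and> (\<forall>i<k. (a+y) + i*d \<in> A)"
        using y ad(1,2) by (auto simp: shift_left_def algebra_simps)
      then show "\<exists>a d. 1 \<le> a \<and> 1 \<le> d \<and> (\<forall>i<k. a + i*d \<in> A)" by blast
    qed
  qed
qed

lemma min_idem_APrich:
  assumes "minimal_idempotent p" "A \<in> p" shows "APrich A"
proof -
  have "p \<in> K_betaN" using assms(1) unfolding minimal_idempotent_def by simp
  then have "p \<in> Iap" unfolding K_betaN_def using Iap_ideal by blast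
  then show ?thesis using assms(2) unfolding Iap_def by blast
qed



definition star :: "nat set set \<Rightarrow> nat set \<Rightarrow> nat set" where
  "star p A = {x \<in> A. shift_left x A \<in> p}"

lemma star_sub: "star p A \<subseteq> A" unfolding star_def by auto

lemma sl_sl: "shift_left y (shift_left x A) = shift_left (x+y) A"
  unfolding shift_left_def Npos_def by (auto simp: add.assoc)

context
  fixes p assumes mi: "minimal_idempotent p"
begin

lemma p_uf: "is_ultrafilter p" using mi unfolding minimal_idempotent_def betaN_def by simp

lemma idem_mem: "A \<in> p \<Longrightarrow> {x\<in>Npos. shift_left x A \<in> p} \<in> p"
proof -
  assume "A \<in> p"
  then have "A \<in> p \<oplus> p" using mi unfolding minimal_idempotent_def by simp
  then show ?thesis unfolding uplus_def by simp
qed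

lemma star_mem: "A \<in> p \<Longrightarrow> star p A \<in> p"
proof -
  assume A: "A \<in> p"
  have "star p A = A \<inter> {x\<in>Npos. shift_left x A \<in> p}" unfolding star_def using uf_sub[OF p_uf A] by auto
  then show ?thesis using uf_int[OF p_uf A idem_mem[OF A]] by simp
qed

lemma star_shift: "x \<in> star p A \<Longrightarrow> shift_left x (star p A) \<in> p"
proof -
  assume x: "x \<in> star p A"
  then have B: "shift_left x A \<in> p" unfolding star_def by simp
  have "star p (shift_left x A) \<subseteq> shift_left x (star p A)"
  proof
    fix y assume y: "y \<in> star p (shift_left x A)"
    then have "y \<in> shift_left x A" "shift_left y (shift_left x A) \<in> p"
      unfolding star_def by auto
    then have "y \<in> Npos" "x + y \<in> A" "shift_left (x+y) A \<in> p"
      unfolding sl_sl by (auto simp: shift_left_def)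
    then show "y \<in> shift_left x (star p A)" unfolding star_def shift_left_def by simp
  qed
  then show ?thesis using uf_up[OF p_uf star_mem[OF B] _ sl_sub] by blast
qed

end

lemma finite_setsum:
  assumes "finite F" "\<forall>n\<in>F. finite (Y n)"
  shows "finite (setsum_sets F Y)"
proof -
  have "setsum_sets F Y \<subseteq> (\<lambda>f. \<Sum>n\<in>F. f n) ` PiE F Y"
  proof
    fix s assume "s \<in> setsum_sets F Y"
    then obtain f where f: "s = (\<Sum>n\<in>F. f n)" "\<forall>n\<in>F. f n \<in> Y n" unfolding setsum_sets_def by blast
    have "restrict f F \<in> PiE F Y" using f(2) by auto
    moreover have "s = (\<Sum>n\<in>F. restrict f F n)" using f(1) by simp
    ultimately show "s \<in> (\<lambda>f. \<Sum>n\<in>F. f n) ` PiE F Y" by blast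
  qed
  moreover have "finite (PiE F Y)" using assms by (simp add: finite_PiE)
  ultimately show ?thesis using finite_subset by blast
qed

lemma setsum_cong:
  assumes "\<forall>n\<in>F. Y n = Z n" shows "setsum_sets F Y = setsum_sets F Z"
proof -
  have "(\<forall>n\<in>F. f n \<in> Y n) = (\<forall>n\<in>F. f n \<in> Z n)" for f using assms by auto
  then show ?thesis unfolding setsum_sets_def by simp
qed

definition good :: "nat set set \<Rightarrow> (nat \<Rightarrow> nat set) \<Rightarrow> (nat \<Rightarrow> nat) \<Rightarrow> nat \<Rightarrow> (nat \<Rightarrow> nat set) \<Rightarrow> bool" where
  "good p C a n Y \<longleftrightarrow> (\<forall>m. 1 \<le> m \<and> m \<le> n \<longrightarrow> Y m \<subseteq> C m \<and> is_AP (Y m) (a m) \<and> finite (Y m)) \<and>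
      (\<forall>F. F \<subseteq> {1..n} \<and> F \<noteq> {} \<longrightarrow> setsum_sets F Y \<subseteq> star p (C (Min F)))"

lemma good_0: "good p C a 0 Y" unfolding good_def by auto

lemma ext_step:
  assumes mi: "minimal_idempotent p" and C: "\<forall>n\<in>Npos. C n \<in> p" and g: "good p C a n Y"
  shows "\<exists>Z. good p C a (Suc n) (Y(Suc n := Z))"
proof -
  have pu: "is_ultrafilter p" using p_uf[OF mi] .
  have gY: "\<And>m. 1 \<le> m \<Longrightarrow> m \<le> n \<Longrightarrow> Y m \<subseteq> C m \<and> is_AP (Y m) (a m) \<and> finite (Y m)"
    and gF: "\<And>F. F \<subseteq> {1..n} \<Longrightarrow> F \<noteq> {} \<Longrightarrow> setsum_sets F Y \<subseteq> star p (C (Min F))"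
    using g unfolding good_def by auto
  define \<F> where "\<F> = Pow {1..n} - {{}}"
  define T where "T = (\<Union>F\<in>\<F>. (\<lambda>x. (x, Min F)) ` setsum_sets F Y)"
  have finT: "finite T" unfolding T_def
  proof (intro finite_UN_I)
    show "finite \<F>" unfolding \<F>_def by simp
    fix F assume "F \<in> \<F>"
    then have "F \<subseteq> {1..n}" by (simp add: \<F>_def)
    then have "finite F" "\<forall>m\<in>F. finite (Y m)" using gY by (auto intro: finite_subset)
    then show "finite ((\<lambda>x. (x, Min F)) ` setsum_sets F Y)" using finite_setsum by blast
  qed
  define W where "W = (\<lambda>(x,m). shift_left x (star p (C m))) ` T"
  have WP: "W \<subseteq> p"
  proof
    fix w assume "w \<in> W"
    then obtain F x where F: "F \<in> \<F>" "x \<in> setsum_sets F Y" "w = shift_left x (star p (C (Min F)))"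
      unfolding W_def T_def by auto
    have F1: "F \<subseteq> {1..n}" "F \<noteq> {}" using F(1) unfolding \<F>_def by auto
    then have "Min F \<in> F" using finite_subset[OF F1(1)] by (intro Min_in) auto
    then have "Min F \<in> Npos" using F1 unfolding Npos_def by auto
    then have "C (Min F) \<in> p" using C by blast
    moreover have "x \<in> star p (C (Min F))" using gF[OF F1] F(2) by blast
    ultimately show "w \<in> p" using star_shift[OF mi] F(3) by blast
  qed
  have "Suc n \<in> Npos" unfolding Npos_def by simp
  then have "star p (C (Suc n)) \<in> p" using star_mem[OF mi] C by blast
  then have Bp: "star p (C (Suc n)) \<inter> \<Inter>W \<in> p"
    using uf_Inter[OF pu _ WP] finT unfolding W_def by blast
  define B where "B = star p (C (Suc n)) \<inter> \<Inter>W"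
  obtain a0 d0 where ad: "1 \<le> a0" "1 \<le> d0" "\<forall>i<a (Suc n). a0 + i*d0 \<in> B"
    using APrichD[OF min_idem_APrich[OF mi Bp]] unfolding B_def by blast
  define Z where "Z = {a0 + i*d0 | i. i < a (Suc n)}"
  have ZB: "Z \<subseteq> B" unfolding Z_def using ad(3) by auto
  have Zap: "is_AP Z (a (Suc n))" unfolding Z_def is_AP_def using ad(1,2) by blast
  have Zfin: "finite Z" unfolding Z_def by simp
  define Y' where "Y' = Y(Suc n := Z)"
  have part1: "\<forall>m. 1 \<le> m \<and> m \<le> Suc n \<longrightarrow> Y' m \<subseteq> C m \<and> is_AP (Y' m) (a m) \<and> finite (Y' m)"
  proof (intro allI impI)
    fix m assume m: "1 \<le> m \<and> m \<le> Suc n"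
    show "Y' m \<subseteq> C m \<and> is_AP (Y' m) (a m) \<and> finite (Y' m)"
    proof (cases "m = Suc n")
      case True
      have "Z \<subseteq> C (Suc n)" using ZB star_sub unfolding B_def by blast
      then show ?thesis using True Zap Zfin unfolding Y'_def by simp
    next
      case False
      then show ?thesis using gY[of m] m unfolding Y'_def by simp
    qed
  qed
  have part2: "\<forall>F. F \<subseteq> {1..Suc n} \<and> F \<noteq> {} \<longrightarrow> setsum_sets F Y' \<subseteq> star p (C (Min F))"
  proof (intro allI impI)
    fix F assume F: "F \<subseteq> {1..Suc n} \<and> F \<noteq> {}"
    have finF: "finite F" using F finite_subset by blast
    show "setsum_sets F Y' \<subseteq> star p (C (Min F))"
    proof (cases "Suc n \<in> F")
      case False
      then have F': "F \<subseteq> {1..n}" using F by (auto simp: le_Suc_eq)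
      have "setsum_sets F Y' = setsum_sets F Y"
        by (rule setsum_cong) (use F' in \<open>auto simp: Y'_def\<close>)
      then show ?thesis using gF[OF F'] F by simp
    next
      case True
      show ?thesis
      proof (cases "F = {Suc n}")
        case True
        show ?thesis
        proof
          fix s assume "s \<in> setsum_sets F Y'"
          then obtain f where "s = (\<Sum>k\<in>F. f k)" "\<forall>k\<in>F. f k \<in> Y' k" unfolding setsum_sets_def by blast
          then have "s \<in> Z" using True by (simp add: Y'_def)
          then show "s \<in> star p (C (Min F))" using ZB True unfolding B_def by auto
        qed
      next
        case False
        define G where "G = F - {Suc n}"
        have G: "G \<subseteq> {1..n}" "G \<noteq> {}" using F False \<open>Suc n \<in> F\<close> unfolding G_def by (auto simp: le_Suc_eq)
        have finG: "finite G" using G(1) finite_subset by blast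
        have FG: "F = insert (Suc n) G" "Suc n \<notin> G" using \<open>Suc n \<in> F\<close> unfolding G_def by auto
        have "Min F = min (Suc n) (Min G)" using FG finG G(2) by simp
        also have "... = Min G" using Min_in[OF finG G(2)] G(1) by (auto simp: min_def)
        finally have MF: "Min F = Min G" .
        have "G \<in> \<F>" using G unfolding \<F>_def by auto
        show ?thesis
        proof
          fix s assume "s \<in> setsum_sets F Y'"
          then obtain f where f: "s = (\<Sum>k\<in>F. f k)" "\<forall>k\<in>F. f k \<in> Y' k" unfolding setsum_sets_def by blast
          have s: "s = f (Suc n) + (\<Sum>k\<in>G. f k)" using f(1) FG finG by simp
          have "\<forall>k\<in>G. f k \<in> Y k"
          proof
            fix k assume "k \<in> G"
            then have "k \<noteq> Suc n" "k \<in> F" using FG by auto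
            then show "f k \<in> Y k" using f(2) unfolding Y'_def by auto
          qed
          then have x: "(\<Sum>k\<in>G. f k) \<in> setsum_sets G Y" unfolding setsum_sets_def by blast
          then have "((\<Sum>k\<in>G. f k), Min G) \<in> T" unfolding T_def using \<open>G \<in> \<F>\<close> by blast
          then have "shift_left (\<Sum>k\<in>G. f k) (star p (C (Min G))) \<in> W" unfolding W_def by force
          moreover have "f (Suc n) \<in> Z" using f(2) FG unfolding Y'_def by auto
          ultimately have "f (Suc n) \<in> shift_left (\<Sum>k\<in>G. f k) (star p (C (Min G)))"
            using ZB unfolding B_def by blast
          then show "s \<in> star p (C (Min F))" unfolding shift_left_def using s MF by (simp add: add.commute)
        qed
      qed
    qed
  qed
  have "good p C a (Suc n) Y'" unfolding good_def using part1 part2 by blast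
  then show ?thesis unfolding Y'_def by blast
qed

primrec Yseq :: "nat set set \<Rightarrow> (nat \<Rightarrow> nat set) \<Rightarrow> (nat \<Rightarrow> nat) \<Rightarrow> nat \<Rightarrow> nat \<Rightarrow> nat set" where
  "Yseq p C a 0 = (\<lambda>_. {})"
| "Yseq p C a (Suc n) = (Yseq p C a n)(Suc n := (SOME Z. good p C a (Suc n) ((Yseq p C a n)(Suc n := Z))))"

lemma Yseq_good:
  assumes mi: "minimal_idempotent p" and C: "\<forall>n\<in>Npos. C n \<in> p"
  shows "good p C a n (Yseq p C a n)"
proof (induction n)
  case 0 show ?case by (simp add: good_0)
next
  case (Suc n)
  have "good p C a (Suc n) ((Yseq p C a n)(Suc n := (SOME Z. good p C a (Suc n) ((Yseq p C a n)(Suc n := Z)))))"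
    by (rule someI_ex[OF ext_step[OF mi C Suc]])
  then show ?case by (simp only: Yseq.simps)
qed

lemma Yseq_stable: "k \<le> n \<Longrightarrow> Yseq p C a n k = Yseq p C a k k"
proof (induction n)
  case 0 then show ?case by simp
next
  case (Suc n)
  show ?case
  proof (cases "k = Suc n")
    case True then show ?thesis by simp
  next
    case False then show ?thesis using Suc by simp
  qed
qed

theorem theorem2p3:
  fixes p :: "nat set set" and C :: "nat \<Rightarrow> nat set" and a :: "nat \<Rightarrow> nat"
  assumes "minimal_idempotent p"
    and "\<forall>n\<in>Npos. C n \<in> p"
    and "\<forall>n\<in>Npos. a n \<in> Npos"
  shows "\<exists>Y :: nat \<Rightarrow> nat set.
           (\<forall>n\<in>Npos. Y n \<subseteq> C n \<and> is_AP (Y n) (a n)) \<and>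
           (\<forall>F. finite F \<and> F \<noteq> {} \<and> F \<subseteq> Npos \<longrightarrow> setsum_sets F Y \<subseteq> C (Min F))"
proof -
  define Y where "Y k = Yseq p C a k k" for k
  have "\<forall>n\<in>Npos. Y n \<subseteq> C n \<and> is_AP (Y n) (a n)"
  proof
    fix n assume "n \<in> Npos"
    then have "1 \<le> n" unfolding Npos_def by simp
    have "good p C a n (Yseq p C a n)" using Yseq_good[OF assms(1,2)] .
    then have "\<And>m. 1 \<le> m \<Longrightarrow> m \<le> n \<Longrightarrow> Yseq p C a n m \<subseteq> C m \<and> is_AP (Yseq p C a n m) (a m)"
      unfolding good_def by blast
    then show "Y n \<subseteq> C n \<and> is_AP (Y n) (a n)"
      using \<open>1 \<le> n\<close> unfolding Y_def by blast
  qed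
  moreover have "\<forall>F. finite F \<and> F \<noteq> {} \<and> F \<subseteq> Npos \<longrightarrow> setsum_sets F Y \<subseteq> C (Min F)"
  proof (intro allI impI)
    fix F assume F: "finite F \<and> F \<noteq> {} \<and> F \<subseteq> Npos"
    define n where "n = Max F"
    have Fn: "F \<subseteq> {1..n}"
    proof
      fix k assume k: "k \<in> F"
      then have "k \<le> n" unfolding n_def using F Max_ge by blast
      moreover have "1 \<le> k" using k F unfolding Npos_def by blast
      ultimately show "k \<in> {1..n}" by simp
    qed
    have "setsum_sets F Y = setsum_sets F (Yseq p C a n)"
    proof (rule setsum_cong, rule ballI)
      fix k assume "k \<in> F"
      then have "k \<le> n" using Fn by auto
      then show "Y k = Yseq p C a n k" unfolding Y_def using Yseq_stable[of k n p C a] by simp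
    qed
    also have "... \<subseteq> star p (C (Min F))"
    proof -
      have "good p C a n (Yseq p C a n)" using Yseq_good[OF assms(1,2)] .
      then have "\<And>F. F \<subseteq> {1..n} \<Longrightarrow> F \<noteq> {} \<Longrightarrow> setsum_sets F (Yseq p C a n) \<subseteq> star p (C (Min F))"
        unfolding good_def by blast
      then show ?thesis using Fn F by blast
    qed
    also have "... \<subseteq> C (Min F)" by (rule star_sub)
    finally show "setsum_sets F Y \<subseteq> C (Min F)" .
  qed
  ultimately show ?thesis by (intro exI[of _ Y] conjI)
qed


end
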